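(* Let $p$ be a prime, $n\ge2$, $1\le m\le n-1$, $\beta>0$, and let $G\subset G(n,n-m)$ with $|G|\gtrsim p^{\beta}$. Let $E\subset\mathbb{F}_p^n$. (1) If for every $\xi\in\mathbb{F}_p^n\setminus\{0\}$ we have $|\{W\in G:\ \xi\in W\}|\lesssim |G|p^{-\beta}$, then $\mathcal{E}(E,G')\lesssim |E||G|+|E|^2|G|p^{-\beta}$. (2) If for every $\xi\in\mathbb{F}_p^n\setminus\{0\}$ we have $|\{W\in G:\ \xi\in Per(W)\}|\lesssim |G|p^{-\beta}$, then $\mathcal{E}(E,G')\lesssim p^{-m}|G|\,(|E|^2+|E|p^{n-\beta})$.
   Context: $\mathbb{F}_p$ is the field with $p$ elements; $G(n,k)$ is the set of $k$-dimensional linear subspaces of $\mathbb{F}_p^n$. For $W\in G(n,n-m)$, $W$ has exactly $p^m$ cosets $x_{W,j}+W$, $1\le j\le p^m$. For $G\subset G(n,n-m)$, $G'$ denotes the collection of all cosets of all $W\in G$, i.e. $G'=\{x_{W,j}+W:\ W\in G,\ 1\le j\le p^m\}$. For a collection $\mathcal{A}$ of affine subspaces and $E\subset\mathbb{F}_p^n$, the energy is $\mathcal{E}(E,\mathcal{A})=\sum_{V\in\mathcal{A}}|E\cap V|^2$. For a subspace $W$, $Per(W)=\{x\in\mathbb{F}_p^n:\ x\cdot w=0\ \text{for all } w\in W\}$, where $x\cdot w=\sum_i x_iw_i$. $|J|$ denotes cardinality. $f\lesssim g$ means $f\le Cg$ with $C$ independent of $p$ and $E$; the implied constants in the conclusions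 depend on those in the hypotheses. *)

theory Defs
  imports Complex_Main "HOL-Computational_Algebra.Primes"
begin

text \<open>Vectors of F_p^n are represented as functions nat => nat whose
  coordinates i < n lie in {0..<p} and whose coordinates i >= n are 0.
  All arithmetic is performed modulo p.\<close>

definition Fvec :: "nat \<Rightarrow> nat \<Rightarrow> (nat \<Rightarrow> nat) set" where
  "Fvec n p = {v. (\<forall>i<n. v i < p) \<and> (\<forall>i\<ge>n. v i = 0)}"

definition vzero :: "nat \<Rightarrow> nat" where
  "vzero = (\<lambda>i. 0)"

definition vadd :: "nat \<Rightarrow> (nat \<Rightarrow> nat) \<Rightarrow> (nat \<Rightarrow> nat) \<Rightarrow> (nat \<Rightarrow> nat)" where
  "vadd p u v = (\<lambda>i. (u i + v i) mod p)"

definition smul :: "nat \<Rightarrow> nat \<Rightarrow> (nat \<Rightarrow> nat) \<Rightarrow> (nat \<Rightarrow> nat)" where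
  "smul p c v = (\<lambda>i. (c * v i) mod p)"

definition lincomb :: "nat \<Rightarrow> nat \<Rightarrow> (nat \<Rightarrow> nat) \<Rightarrow> (nat \<Rightarrow> nat \<Rightarrow> nat) \<Rightarrow> (nat \<Rightarrow> nat)" where
  "lincomb p k c b = (\<lambda>i. (\<Sum>j<k. c j * b j i) mod p)"

definition is_subspace :: "nat \<Rightarrow> nat \<Rightarrow> (nat \<Rightarrow> nat) set \<Rightarrow> bool" where
  "is_subspace n p W \<longleftrightarrow> W \<subseteq> Fvec n p \<and> vzero \<in> W \<and>
     (\<forall>u\<in>W. \<forall>v\<in>W. vadd p u v \<in> W) \<and> (\<forall>c<p. \<forall>v\<in>W. smul p c v \<in> W)"

definition has_dim :: "nat \<Rightarrow> nat \<Rightarrow> nat \<Rightarrow> (nat \<Rightarrow> nat) set \<Rightarrow> bool" where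
  "has_dim n p k W \<longleftrightarrow> (\<exists>b. (\<forall>j<k. b j \<in> Fvec n p) \<and>
      (\<forall>c. (\<forall>j<k. c j < p) \<longrightarrow> lincomb p k c b = vzero \<longrightarrow> (\<forall>j<k. c j = 0)) \<and>
      W = {lincomb p k c b | c. \<forall>j<k. c j < p})"

definition Grass :: "nat \<Rightarrow> nat \<Rightarrow> nat \<Rightarrow> (nat \<Rightarrow> nat) set set" where
  "Grass p n k = {W. is_subspace n p W \<and> has_dim n p k W}"

definition coset :: "nat \<Rightarrow> (nat \<Rightarrow> nat) \<Rightarrow> (nat \<Rightarrow> nat) set \<Rightarrow> (nat \<Rightarrow> nat) set" where
  "coset p x W = (\<lambda>w. vadd p x w) ` W"

text \<open>G' : all cosets of all W in G.\<close>
definition cosets_of :: "nat \<Rightarrow> nat \<Rightarrow> (nat \<Rightarrow> nat) set set \<Rightarrow> (nat \<Rightarrow> nat) set set" where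
  "cosets_of n p G = (\<Union>W\<in>G. {coset p x W | x. x \<in> Fvec n p})"

definition energy :: "(nat \<Rightarrow> nat) set \<Rightarrow> (nat \<Rightarrow> nat) set set \<Rightarrow> nat" where
  "energy E A = (\<Sum>V\<in>A. card (E \<inter> V) ^ 2)"

definition dotp :: "nat \<Rightarrow> nat \<Rightarrow> (nat \<Rightarrow> nat) \<Rightarrow> (nat \<Rightarrow> nat) \<Rightarrow> nat" where
  "dotp n p x w = (\<Sum>i<n. x i * w i) mod p"

definition Per :: "nat \<Rightarrow> nat \<Rightarrow> (nat \<Rightarrow> nat) set \<Rightarrow> (nat \<Rightarrow> nat) set" where
  "Per n p W = {x \<in> Fvec n p. \<forall>w\<in>W. dotp n p x w = 0}"

end

theory Submission imports Defs "HOL-Library.FuncSet" "HOL-Number_Theory.Cong" begin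

lemma Fvec_lt: "v \<in> Fvec n p \<Longrightarrow> 0 < p \<Longrightarrow> v i < p"
  unfolding Fvec_def by (cases "i < n") auto

lemma Fvec_mod: "v \<in> Fvec n p \<Longrightarrow> 0 < p \<Longrightarrow> v i mod p = v i"
  using Fvec_lt by simp

lemma vadd_Fvec: "0 < p \<Longrightarrow> u \<in> Fvec n p \<Longrightarrow> v \<in> Fvec n p \<Longrightarrow> vadd p u v \<in> Fvec n p"
  unfolding Fvec_def vadd_def by auto

lemma smul_Fvec: "0 < p \<Longrightarrow> v \<in> Fvec n p \<Longrightarrow> smul p c v \<in> Fvec n p"
  unfolding Fvec_def smul_def by auto

lemma vzero_Fvec: "0 < p \<Longrightarrow> vzero \<in> Fvec n p"
  unfolding Fvec_def vzero_def by auto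

lemma vadd_zero: "0 < p \<Longrightarrow> x \<in> Fvec n p \<Longrightarrow> vadd p x vzero = x"
  unfolding vadd_def vzero_def using Fvec_mod by auto

lemma Fvec_finite_card: "finite (Fvec n p) \<and> card (Fvec n p) = p ^ n"
proof -
  have "bij_betw (\<lambda>v. restrict v {..<n}) (Fvec n p) ({..<n} \<rightarrow>\<^sub>E {..<p})"
    by (rule bij_betw_byWitness[where f'="\<lambda>f i. if i < n then f i else 0"])
       (auto simp: Fvec_def restrict_def PiE_def extensional_def fun_eq_iff)
  moreover have "finite ({..<n} \<rightarrow>\<^sub>E {..<p})" by (simp add: finite_PiE)
  moreover have "card ({..<n} \<rightarrow>\<^sub>E {..<p}) = p ^ n" by (simp add: card_PiE)
  ultimately show ?thesis by (metis bij_betw_finite bij_betw_same_card)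
qed

lemma sum_UN_le_nonneg:
  fixes f :: "'a \<Rightarrow> real"
  assumes "finite I" "\<And>i. i \<in> I \<Longrightarrow> finite (A i)" "\<And>x. f x \<ge> 0"
  shows "sum f (\<Union>i\<in>I. A i) \<le> (\<Sum>i\<in>I. sum f (A i))"
  using assms
proof (induction I rule: finite_induct)
  case empty then show ?case by simp
next
  case (insert a I)
  have "sum f (A a \<union> (\<Union>i\<in>I. A i)) \<le> sum f (A a) + sum f (\<Union>i\<in>I. A i)"
  proof -
    have "finite (A a)" "finite (\<Union>i\<in>I. A i)" using insert by auto
    moreover have "sum f (A a \<inter> (\<Union>i\<in>I. A i)) \<ge> 0" using insert by (simp add: sum_nonneg)
    ultimately show ?thesis by (simp add: sum_Un)
  qed
  also have "\<dots> \<le> sum f (A a) + (\<Sum>i\<in>I. sum f (A i))" using insert by auto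
  finally show ?case using insert by simp
qed

lemma coset_eq:
  assumes p: "0 < p" and W: "is_subspace n p W" and a: "a \<in> Fvec n p" and x: "x \<in> coset p a W"
  shows "coset p a W = coset p x W"
proof -
  obtain w1 where w1: "w1 \<in> W" "x = vadd p a w1" using x unfolding coset_def by auto
  have S: "\<And>u v. u \<in> W \<Longrightarrow> v \<in> W \<Longrightarrow> vadd p u v \<in> W" "\<And>c v. c < p \<Longrightarrow> v \<in> W \<Longrightarrow> smul p c v \<in> W"
    using W unfolding is_subspace_def by auto
  show ?thesis
  proof
    show "coset p a W \<subseteq> coset p x W"
    proof
      fix z assume "z \<in> coset p a W"
      then obtain w where w: "w \<in> W" "z = vadd p a w" unfolding coset_def by auto
      have "vadd p w (smul p (p - 1) w1) \<in> W" using S w w1 p by auto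
      moreover have "z = vadd p x (vadd p w (smul p (p - 1) w1))"
      proof -
        have "\<And>i. (a i + w i) mod p = ((a i + w1 i) mod p + (w i + (p - 1) * w1 i mod p) mod p) mod p"
        proof -
          fix i
          have "(p - 1) * w1 i + w1 i = p * w1 i" using p by (cases p) auto
          then have "a i + w1 i + (w i + (p - 1) * w1 i) = a i + w i + p * w1 i"
            by simp
          then show "(a i + w i) mod p = ((a i + w1 i) mod p + (w i + (p - 1) * w1 i mod p) mod p) mod p"
            by (metis mod_add_eq mod_add_right_eq mod_mult_self2)
        qed
        then show ?thesis using w w1 unfolding vadd_def smul_def by auto
      qed
      ultimately show "z \<in> coset p x W" unfolding coset_def by auto
    qed
  next
    show "coset p x W \<subseteq> coset p a W"
    proof
      fix z assume "z \<in> coset p x W"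
      then obtain w where w: "w \<in> W" "z = vadd p x w" unfolding coset_def by auto
      have "vadd p w1 w \<in> W" using S w w1 by auto
      moreover have "z = vadd p a (vadd p w1 w)"
        using w w1 unfolding vadd_def by (auto simp: mod_simps add.assoc)
      ultimately show "z \<in> coset p a W" unfolding coset_def by auto
    qed
  qed
qed


lemma energy_le:
  assumes p: "0 < p" and G: "finite G" "\<And>W. W \<in> G \<Longrightarrow> is_subspace n p W" and E: "E \<subseteq> Fvec n p"
  shows "real (energy E (cosets_of n p G)) \<le> (\<Sum>W\<in>G. \<Sum>x\<in>E. real (card {y\<in>E. y \<in> coset p x W}))"
proof -
  define C where "C W = {coset p x W | x. x \<in> Fvec n p}" for W
  have fF: "finite (Fvec n p)" using Fvec_finite_card by blast
  have fE: "finite E" using E fF finite_subset by blast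
  have fC: "finite (C W)" for W
  proof -
    have "C W = (\<lambda>x. coset p x W) ` Fvec n p" unfolding C_def by auto
    then show ?thesis using fF by simp
  qed
  have "real (energy E (cosets_of n p G)) = (\<Sum>V\<in>(\<Union>W\<in>G. C W). real (card (E \<inter> V)) ^ 2)"
    unfolding energy_def cosets_of_def C_def by simp
  also have "\<dots> \<le> (\<Sum>W\<in>G. \<Sum>V\<in>C W. real (card (E \<inter> V)) ^ 2)"
    by (rule sum_UN_le_nonneg) (use G fC in auto)
  also have "\<dots> \<le> (\<Sum>W\<in>G. \<Sum>x\<in>E. real (card {y\<in>E. y \<in> coset p x W}))"
  proof (rule sum_mono)
    fix W assume WG: "W \<in> G"
    define r where "r x = real (card {y\<in>E. y \<in> coset p x W})" for x
    have "(\<Sum>V\<in>C W. real (card (E \<inter> V)) ^ 2) = (\<Sum>V\<in>C W. \<Sum>x\<in>E. if x \<in> V then r x else 0)"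
    proof (rule sum.cong[OF refl])
      fix V assume V: "V \<in> C W"
      then obtain a where a: "a \<in> Fvec n p" "V = coset p a W" unfolding C_def by auto
      have "real (card (E \<inter> V)) ^ 2 = (\<Sum>x\<in>E \<inter> V. real (card (E \<inter> V)))"
        by (simp add: power2_eq_square)
      also have "\<dots> = (\<Sum>x\<in>E \<inter> V. r x)"
      proof (rule sum.cong[OF refl])
        fix x assume "x \<in> E \<inter> V"
        then have "V = coset p x W" using coset_eq[OF p G(2)[OF WG] a(1)] a by auto
        then show "real (card (E \<inter> V)) = r x" unfolding r_def by (simp add: Int_def)
      qed
      also have "\<dots> = (\<Sum>x\<in>E. if x \<in> V then r x else 0)"
        using fE by (simp add: sum.inter_restrict)
      finally show "real (card (E \<inter> V)) ^ 2 = (\<Sum>x\<in>E. if x \<in> V then r x else 0)" .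
    qed
    also have "\<dots> = (\<Sum>x\<in>E. \<Sum>V\<in>C W. if x \<in> V then r x else 0)"
      by (rule sum.swap)
    also have "\<dots> \<le> (\<Sum>x\<in>E. r x)"
    proof (rule sum_mono)
      fix x assume xE: "x \<in> E"
      have "(\<Sum>V\<in>C W. if x \<in> V then r x else 0) = (\<Sum>V\<in>{V\<in>C W. x \<in> V}. r x)"
        using sum.inter_filter[OF fC[of W], of "\<lambda>_. r x" "\<lambda>V. x \<in> V"] by simp
      also have "\<dots> = real (card {V\<in>C W. x \<in> V}) * r x" by simp
      also have "\<dots> \<le> 1 * r x"
      proof (rule mult_right_mono)
        have "{V\<in>C W. x \<in> V} \<subseteq> {coset p x W}"
        proof
          fix V assume "V \<in> {V\<in>C W. x \<in> V}"
          then obtain a where "a \<in> Fvec n p" "V = coset p a W" "x \<in> V" unfolding C_def by auto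
          then show "V \<in> {coset p x W}" using coset_eq[OF p G(2)[OF WG]] by auto
        qed
        then have "card {V\<in>C W. x \<in> V} \<le> 1" using card_mono[of "{coset p x W}"] by fastforce
        then show "real (card {V\<in>C W. x \<in> V}) \<le> 1" by simp
        show "0 \<le> r x" unfolding r_def by simp
      qed
      finally show "(\<Sum>V\<in>C W. if x \<in> V then r x else 0) \<le> r x" by simp
    qed
    finally show "(\<Sum>V\<in>C W. real (card (E \<inter> V)) ^ 2) \<le> (\<Sum>x\<in>E. real (card {y\<in>E. y \<in> coset p x W}))"
      unfolding r_def .
  qed
  finally show ?thesis .
qed


definition vsub :: "nat \<Rightarrow> (nat \<Rightarrow> nat) \<Rightarrow> (nat \<Rightarrow> nat) \<Rightarrow> (nat \<Rightarrow> nat)" where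
  "vsub p y x = (\<lambda>i. (y i + (p - x i)) mod p)"

lemma vsub_vadd:
  assumes p: "0 < p" and x: "x \<in> Fvec n p" and w: "w \<in> Fvec n p"
  shows "vsub p (vadd p x w) x = w"
proof
  fix i
  have a: "x i < p" "w i < p" using Fvec_lt x w p by auto
  show "vsub p (vadd p x w) x i = w i"
  proof (cases "x i + w i < p")
    case True
    then have "(x i + w i) mod p + (p - x i) = w i + p" using a by simp
    then show ?thesis unfolding vsub_def vadd_def using a by simp
  next
    case False
    then have "(x i + w i) mod p = x i + w i - p" using a by (simp add: mod_if)
    then have "(x i + w i) mod p + (p - x i) = w i" using a False by simp
    then show ?thesis unfolding vsub_def vadd_def using a by simp
  qed
qed

lemma vsub_Fvec: "0 < p \<Longrightarrow> x \<in> Fvec n p \<Longrightarrow> y \<in> Fvec n p \<Longrightarrow> vsub p y x \<in> Fvec n p"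
  unfolding Fvec_def vsub_def by auto

lemma Grass_sub: "W \<in> Grass p n k \<Longrightarrow> is_subspace n p W"
  unfolding Grass_def by auto

lemma Grass_finite: "finite (Grass p n k)"
proof -
  have "Grass p n k \<subseteq> Pow (Fvec n p)" unfolding Grass_def is_subspace_def by auto
  then show ?thesis using Fvec_finite_card by (meson finite_Pow_iff finite_subset)
qed

lemma part1:
  assumes p: "0 < p" and G: "G \<subseteq> Grass p n k" and E: "E \<subseteq> Fvec n p" and B: "B \<ge> 0"
    and hyp: "\<forall>\<xi>\<in>Fvec n p - {vzero}. real (card {W\<in>G. \<xi> \<in> W}) \<le> B"
  shows "real (energy E (cosets_of n p G)) \<le> real (card E) * real (card G) + real (card E) ^ 2 * B"
proof -
  have fG: "finite G" using G Grass_finite finite_subset by blast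
  have sG: "\<And>W. W \<in> G \<Longrightarrow> is_subspace n p W" using G Grass_sub by blast
  have fE: "finite E" using E Fvec_finite_card finite_subset by blast
  have "real (energy E (cosets_of n p G)) \<le> (\<Sum>W\<in>G. \<Sum>x\<in>E. real (card {y\<in>E. y \<in> coset p x W}))"
    by (rule energy_le[OF p fG sG E])
  also have "\<dots> = (\<Sum>W\<in>G. \<Sum>x\<in>E. \<Sum>y\<in>E. if y \<in> coset p x W then 1 else 0)"
    using fE by (simp add: sum.If_cases Int_def)
  also have "\<dots> = (\<Sum>x\<in>E. \<Sum>y\<in>E. \<Sum>W\<in>G. if y \<in> coset p x W then 1 else 0)"
    by (simp add: sum.swap[of _ G] sum.swap[of _ G E])
  also have "\<dots> \<le> (\<Sum>x\<in>E. \<Sum>y\<in>E. (if y = x then real (card G) else 0) + B)"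
  proof (intro sum_mono)
    fix x y assume x: "x \<in> E" and y: "y \<in> E"
    show "(\<Sum>W\<in>G. if y \<in> coset p x W then 1 else 0) \<le> (if y = x then real (card G) else 0) + B"
    proof (cases "y = x")
      case True
      have "(\<Sum>W\<in>G. if y \<in> coset p x W then 1 else (0::real)) \<le> (\<Sum>W\<in>G. 1)"
        by (rule sum_mono) auto
      then show ?thesis using True B by simp
    next
      case False
      have "(\<Sum>W\<in>G. if y \<in> coset p x W then 1 else (0::real)) \<le> (\<Sum>W\<in>G. if vsub p y x \<in> W then 1 else 0)"
      proof (rule sum_mono)
        fix W assume WG: "W \<in> G"
        have "vsub p y x \<in> W" if yc: "y \<in> coset p x W"
        proof -
          obtain w where "w \<in> W" "y = vadd p x w" using yc unfolding coset_def by auto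
          moreover have "w \<in> Fvec n p" using sG[OF WG] \<open>w \<in> W\<close> unfolding is_subspace_def by auto
          ultimately show ?thesis using vsub_vadd[OF p] x E by auto
        qed
        then show "(if y \<in> coset p x W then 1 else (0::real)) \<le> (if vsub p y x \<in> W then 1 else 0)" by auto
      qed
      also have "\<dots> = (\<Sum>W\<in>{W\<in>G. vsub p y x \<in> W}. (1::real))"
        using fG by (simp only: sum.inter_filter)
      also have "\<dots> = real (card {W\<in>G. vsub p y x \<in> W})" by simp
      also have "\<dots> \<le> B"
      proof -
        have xF: "x \<in> Fvec n p" and yF: "y \<in> Fvec n p" using x y E by auto
        have "vsub p y x \<noteq> vzero"
        proof
          assume z: "vsub p y x = vzero"
          have "y i = x i" for i
          proof -
            have "(y i + (p - x i)) mod p = 0" using z unfolding vsub_def vzero_def by meson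
            moreover have "y i < p" "x i < p" using Fvec_lt xF yF p by auto
            ultimately show ?thesis
            proof (cases "x i \<le> y i")
              case True
              then have "y i + (p - x i) = (y i - x i) + p" using \<open>x i < p\<close> by simp
              then have "(y i - x i) mod p = 0" using \<open>(y i + (p - x i)) mod p = 0\<close> by simp
              then show ?thesis using True \<open>y i < p\<close> by simp
            next
              case False
              then have "y i + (p - x i) < p" "0 < y i + (p - x i)" using \<open>x i < p\<close> by auto
              then show ?thesis using \<open>(y i + (p - x i)) mod p = 0\<close> by simp
            qed
          qed
          then show False using False by auto
        qed
        then show ?thesis using hyp vsub_Fvec[OF p xF yF] by auto
      qed
      finally show ?thesis using False by simp
    qed
  qed
  also have "\<dots> = (\<Sum>x\<in>E. real (card G) + real (card E) * B)"
  proof (rule sum.cong[OF refl])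
    fix x assume "x \<in> E"
    then show "(\<Sum>y\<in>E. (if y = x then real (card G) else 0) + B) = real (card G) + real (card E) * B"
      using fE by (simp add: sum.distrib)
  qed
  also have "\<dots> = real (card E) * real (card G) + real (card E) ^ 2 * B"
    by (simp add: algebra_simps power2_eq_square)
  finally show ?thesis .
qed


lemma mod_sum_left: "(\<Sum>i<(n::nat). (f i mod p) * g i) mod p = (\<Sum>i<n. f i * g i) mod (p::nat)"
proof (induction n)
  case 0 then show ?case by simp
next
  case (Suc n)
  have "(\<Sum>i<Suc n. (f i mod p) * g i) mod p = ((\<Sum>i<n. (f i mod p) * g i) mod p + (f n mod p) * g n) mod p"
    by (simp add: mod_add_left_eq)
  also have "\<dots> = ((\<Sum>i<n. f i * g i) mod p + (f n mod p) * g n) mod p" using Suc by simp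
  also have "\<dots> = ((\<Sum>i<n. f i * g i) + (f n mod p) * g n) mod p"
    by (simp add: mod_add_left_eq)
  also have "\<dots> = ((\<Sum>i<n. f i * g i) + f n * g n) mod p"
    by (metis mod_add_right_eq mod_mult_left_eq)
  also have "\<dots> = (\<Sum>i<Suc n. f i * g i) mod p" by simp
  finally show ?case .
qed

lemma dotp_comm: "dotp n p x w = dotp n p w x"
  unfolding dotp_def by (simp add: mult.commute)

lemma dotp_lt: "0 < p \<Longrightarrow> dotp n p x w < p"
  unfolding dotp_def by simp

lemma dotp_vadd_left: "dotp n p (vadd p u v) w = (dotp n p u w + dotp n p v w) mod p"
proof -
  have "dotp n p (vadd p u v) w = (\<Sum>i<n. (u i + v i) * w i) mod p"
    unfolding dotp_def vadd_def by (rule mod_sum_left)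
  also have "\<dots> = ((\<Sum>i<n. u i * w i) + (\<Sum>i<n. v i * w i)) mod p"
    by (simp add: distrib_right sum.distrib)
  also have "\<dots> = (dotp n p u w + dotp n p v w) mod p"
    unfolding dotp_def by (simp add: mod_add_eq)
  finally show ?thesis .
qed

lemma dotp_smul_left: "dotp n p (smul p c u) w = (c * dotp n p u w) mod p"
proof -
  have "dotp n p (smul p c u) w = (\<Sum>i<n. (c * u i) * w i) mod p"
    unfolding dotp_def smul_def by (rule mod_sum_left)
  also have "\<dots> = (c * (\<Sum>i<n. u i * w i)) mod p"
    by (simp add: sum_distrib_left mult.assoc)
  also have "\<dots> = (c * dotp n p u w) mod p"
    unfolding dotp_def by (simp add: mod_mult_right_eq)
  finally show ?thesis .
qed

lemma dotp_vadd_right: "dotp n p x (vadd p u v) = (dotp n p x u + dotp n p x v) mod p"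
  using dotp_vadd_left dotp_comm by metis

lemma dotp_smul_right: "dotp n p x (smul p c u) = (c * dotp n p x u) mod p"
  using dotp_smul_left dotp_comm by metis

lemma dotp_vzero_left: "dotp n p vzero w = 0"
  unfolding dotp_def vzero_def by simp

lemma dotp_vzero_right: "dotp n p x vzero = 0"
  unfolding dotp_def vzero_def by simp

lemma Per_subspace:
  assumes p: "0 < p"
  shows "is_subspace n p (Per n p W)"
  unfolding is_subspace_def
proof (intro conjI ballI allI impI)
  show "Per n p W \<subseteq> Fvec n p" unfolding Per_def by auto
  show "vzero \<in> Per n p W" unfolding Per_def using vzero_Fvec[OF p] dotp_vzero_left by auto
  fix u v assume u: "u \<in> Per n p W" and v: "v \<in> Per n p W"
  then show "vadd p u v \<in> Per n p W" unfolding Per_def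
    using vadd_Fvec[OF p] dotp_vadd_left by auto
next
  fix c v assume "c < p" "v \<in> Per n p W"
  then show "smul p c v \<in> Per n p W" unfolding Per_def
    using smul_Fvec[OF p] dotp_smul_left by auto
qed

lemma Per_vzero: "Per n p {vzero} = Fvec n p"
  unfolding Per_def using dotp_vzero_right by auto


lemma vadd_vsub:
  assumes p: "0 < p" and x: "x \<in> Fvec n p" and y: "y \<in> Fvec n p"
  shows "vadd p x (vsub p y x) = y"
proof
  fix i
  have a: "x i < p" "y i < p" using Fvec_lt x y p by auto
  have "(x i + (y i + (p - x i)) mod p) mod p = (x i + (y i + (p - x i))) mod p" by (simp add: mod_add_right_eq)
  also have "x i + (y i + (p - x i)) = y i + p" using a by simp
  finally show "vadd p x (vsub p y x) i = y i" unfolding vadd_def vsub_def using a by simp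
qed

lemma mod_add_same:
  assumes a: "a < p" "t < (p::nat)" "(a + t) mod p = a" shows "t = 0"
proof (cases "a + t < p")
  case True
  then show ?thesis using a by simp
next
  case False
  then have "(a + t) mod p = (a + t - p) mod p" by (simp add: le_mod_geq)
  also have "\<dots> = a + t - p" using a by simp
  finally have "(a + t) mod p = a + t - p" .
  then show ?thesis using a False by linarith
qed

lemma mod_sum_right: "(\<Sum>i<(n::nat). g i * (f i mod p)) mod p = (\<Sum>i<n. g i * f i) mod (p::nat)"
  using mod_sum_left[of f p g n] by (simp add: mult.commute[of "g _"])

lemma Per_card_ge:
  assumes p: "0 < p" and W: "W \<in> Grass p n k" and kn: "k \<le> n"
  shows "p ^ (n - k) \<le> card (Per n p W)"
proof -
  obtain b where b: "\<And>j. j < k \<Longrightarrow> b j \<in> Fvec n p" and Wb: "W = {lincomb p k c b | c. \<forall>j<k. c j < p}"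
    using W unfolding Grass_def has_dim_def by blast
  define K where "K = {x\<in>Fvec n p. \<forall>j<k. dotp n p x (b j) = 0}"
  have fF: "finite (Fvec n p)" and cF: "card (Fvec n p) = p ^ n" using Fvec_finite_card by auto
  have KP: "K \<subseteq> Per n p W"
  proof
    fix x assume xK: "x \<in> K"
    have "dotp n p x w = 0" if "w \<in> W" for w
    proof -
      obtain c where w: "w = lincomb p k c b" using \<open>w \<in> W\<close> Wb by auto
      have "dotp n p x w = (\<Sum>i<n. x i * ((\<Sum>j<k. c j * b j i) mod p)) mod p"
        unfolding w dotp_def lincomb_def by simp
      also have "\<dots> = (\<Sum>i<n. x i * (\<Sum>j<k. c j * b j i)) mod p" by (rule mod_sum_right)
      also have "(\<Sum>i<n. x i * (\<Sum>j<k. c j * b j i)) = (\<Sum>j<k. c j * (\<Sum>i<n. x i * b j i))"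
      proof -
        have "(\<Sum>i<n. x i * (\<Sum>j<k. c j * b j i)) = (\<Sum>i<n. \<Sum>j<k. c j * (x i * b j i))"
          by (simp add: sum_distrib_left mult.left_commute)
        also have "\<dots> = (\<Sum>j<k. \<Sum>i<n. c j * (x i * b j i))" by (rule sum.swap)
        also have "\<dots> = (\<Sum>j<k. c j * (\<Sum>i<n. x i * b j i))" by (simp add: sum_distrib_left)
        finally show ?thesis .
      qed
      also have "(\<Sum>j<k. c j * (\<Sum>i<n. x i * b j i)) mod p = (\<Sum>j<k. c j * ((\<Sum>i<n. x i * b j i) mod p)) mod p"
        by (rule mod_sum_right[symmetric])
      also have "\<dots> = 0" using xK unfolding K_def dotp_def by simp
      finally show ?thesis .
    qed
    then show "x \<in> Per n p W" using xK unfolding K_def Per_def by (auto simp: dotp_comm)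
  qed
  have fP: "finite (Per n p W)" using fF unfolding Per_def by simp
  define \<phi> where "\<phi> x = restrict (\<lambda>j. dotp n p x (b j)) {..<k}" for x
  have img: "\<phi> ` Fvec n p \<subseteq> {..<k} \<rightarrow>\<^sub>E {..<p}" unfolding \<phi>_def using dotp_lt[OF p] by (simp add: image_subset_iff restrict_PiE_iff)
  have cimg: "card (\<phi> ` Fvec n p) \<le> p ^ k"
  proof -
    have "card (\<phi> ` Fvec n p) \<le> card ({..<k} \<rightarrow>\<^sub>E {..<p})"
      by (rule card_mono[OF _ img]) (simp add: finite_PiE)
    then show ?thesis by (simp add: card_PiE)
  qed
  have fib: "card {x\<in>Fvec n p. \<phi> x = v} \<le> card K" if v: "v \<in> \<phi> ` Fvec n p" for v
  proof -
    obtain x0 where x0: "x0 \<in> Fvec n p" "v = \<phi> x0" using v by auto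
    have "{x\<in>Fvec n p. \<phi> x = v} \<subseteq> vadd p x0 ` K"
    proof
      fix y assume "y \<in> {x\<in>Fvec n p. \<phi> x = v}"
      then have y: "y \<in> Fvec n p" "\<phi> y = \<phi> x0" using x0 by auto
      define z where "z = vsub p y x0"
      have zF: "z \<in> Fvec n p" unfolding z_def using vsub_Fvec[OF p x0(1) y(1)] .
      have yz: "y = vadd p x0 z" unfolding z_def using vadd_vsub[OF p x0(1) y(1)] by simp
      have "dotp n p z (b j) = 0" if j: "j < k" for j
      proof -
        have "dotp n p y (b j) = dotp n p x0 (b j)" using y(2) j unfolding \<phi>_def by (metis restrict_apply' lessThan_iff)
        then have "(dotp n p x0 (b j) + dotp n p z (b j)) mod p = dotp n p x0 (b j)"
          using yz dotp_vadd_left by metis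
        then show ?thesis using mod_add_same dotp_lt[OF p] by blast
      qed
      then have "z \<in> K" unfolding K_def using zF by auto
      then show "y \<in> vadd p x0 ` K" using yz by auto
    qed
    moreover have "finite K" using fF unfolding K_def by simp
    ultimately have "card {x\<in>Fvec n p. \<phi> x = v} \<le> card (vadd p x0 ` K)"
      by (simp add: card_mono)
    also have "\<dots> \<le> card K" by (rule card_image_le) (use fF in \<open>simp add: K_def\<close>)
    finally show ?thesis .
  qed
  have "p ^ n = card (\<Union>v\<in>\<phi> ` Fvec n p. {x\<in>Fvec n p. \<phi> x = v})"
  proof -
    have "Fvec n p = (\<Union>v\<in>\<phi> ` Fvec n p. {x\<in>Fvec n p. \<phi> x = v})" by auto
    then have "card (Fvec n p) = card (\<Union>v\<in>\<phi> ` Fvec n p. {x\<in>Fvec n p. \<phi> x = v})" by (rule arg_cong)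
    with cF show ?thesis by linarith
  qed
  also have "\<dots> \<le> (\<Sum>v\<in>\<phi> ` Fvec n p. card {x\<in>Fvec n p. \<phi> x = v})"
    by (rule card_UN_le) (use fF in simp)
  also have "\<dots> \<le> (\<Sum>v\<in>\<phi> ` Fvec n p. card K)" by (rule sum_mono) (rule fib)
  also have "\<dots> = card (\<phi> ` Fvec n p) * card K" by simp
  also have "\<dots> \<le> p ^ k * card K" using cimg by simp
  finally have "p ^ k * p ^ (n - k) \<le> p ^ k * card K" using kn by (simp add: power_add[symmetric])
  then have "p ^ (n - k) \<le> card K" using p by simp
  also have "\<dots> \<le> card (Per n p W)" using KP fP card_mono by blast
  finally show ?thesis .
qed


lemma mod_cancel_aux: "p dvd (c + c') \<Longrightarrow> ((a + (c*z) mod p) mod p + (c'*z) mod p) mod p = a mod (p::nat)"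
proof -
  assume "p dvd (c + c')"
  then obtain q where q: "c + c' = p * q" by auto
  have "((a + (c*z) mod p) mod p + (c'*z) mod p) mod p = (a + c*z + c'*z) mod p" by (simp add: mod_simps)
  also have "a + c*z + c'*z = a + p * (q * z)" using q by (metis add.assoc distrib_right mult.assoc)
  finally show ?thesis by simp
qed

lemma int_mod_eq0: "a < p \<Longrightarrow> b < p \<Longrightarrow> ((int a - int b) mod int p = 0 \<longleftrightarrow> a = b)"
  by (metis cancel_ab_semigroup_add_class.diff_right_commute diff_0_right
    diff_eq_diff_eq mod_0 mod_diff_right_eq mod_less of_nat_eq_iff zmod_int)

lemma coprime_small: "prime (p::nat) \<Longrightarrow> 0 < u \<Longrightarrow> u < int p \<Longrightarrow> coprime u (int p)"
  by (meson coprime_commute prime_imp_coprime_int prime_nat_int_transfer zdvd_not_zless)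


lemma h_lin:
  "(int (dotp n p y (vadd p \<xi> (smul p c \<xi>0))) - int (dotp n p x (vadd p \<xi> (smul p c \<xi>0)))) mod int p
   = ((int (dotp n p y \<xi>) - int (dotp n p x \<xi>)) mod int p + int c * ((int (dotp n p y \<xi>0) - int (dotp n p x \<xi>0)) mod int p)) mod int p"
proof -
  define a where "a = int (dotp n p y \<xi>)"
  define b where "b = int (dotp n p x \<xi>)"
  define a0 where "a0 = int (dotp n p y \<xi>0)"
  define b0 where "b0 = int (dotp n p x \<xi>0)"
  have "int (dotp n p y (vadd p \<xi> (smul p c \<xi>0))) = (a + (int c * a0) mod int p) mod int p"
    unfolding a_def a0_def by (simp add: dotp_vadd_right dotp_smul_right zmod_int)
  moreover have "int (dotp n p x (vadd p \<xi> (smul p c \<xi>0))) = (b + (int c * b0) mod int p) mod int p"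
    unfolding b_def b0_def by (simp add: dotp_vadd_right dotp_smul_right zmod_int)
  ultimately have "(int (dotp n p y (vadd p \<xi> (smul p c \<xi>0))) - int (dotp n p x (vadd p \<xi> (smul p c \<xi>0)))) mod int p
     = (a + int c * a0 - (b + int c * b0)) mod int p"
    by (simp add: mod_simps)
  also have "\<dots> = ((a - b) + int c * (a0 - b0)) mod int p" by (simp add: algebra_simps)
  also have "\<dots> = ((a - b) mod int p + int c * ((a0 - b0) mod int p)) mod int p"
    by (metis mod_add_left_eq mod_add_right_eq mod_mult_right_eq)
  finally show ?thesis unfolding a_def b_def a0_def b0_def .
qed


lemma fiber_count:
  assumes pr: "prime p" and P: "is_subspace n p P" and \<xi>0: "\<xi>0 \<in> P"
    and ne: "dotp n p x \<xi>0 \<noteq> dotp n p y \<xi>0"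
  shows "p * card {\<xi>\<in>P. dotp n p x \<xi> = dotp n p y \<xi>} = card P"
proof -
  have p: "0 < p" using pr prime_gt_0_nat by blast
  have PF: "P \<subseteq> Fvec n p" using P unfolding is_subspace_def by auto
  have fP: "finite P" using PF Fvec_finite_card finite_subset by blast
  have clo: "\<And>u v. u \<in> P \<Longrightarrow> v \<in> P \<Longrightarrow> vadd p u v \<in> P" "\<And>c v. c < p \<Longrightarrow> v \<in> P \<Longrightarrow> smul p c v \<in> P"
    using P unfolding is_subspace_def by auto
  define h where "h \<xi> = (int (dotp n p y \<xi>) - int (dotp n p x \<xi>)) mod int p" for \<xi>
  have eq0: "dotp n p x \<xi> = dotp n p y \<xi> \<longleftrightarrow> h \<xi> = 0" for \<xi>
    unfolding h_def using int_mod_eq0[OF dotp_lt[OF p] dotp_lt[OF p]] by metis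
  define u where "u = h \<xi>0"
  have u: "0 < u" "u < int p"
  proof -
    have "0 \<le> u" "u < int p" unfolding u_def h_def using p by auto
    moreover have "u \<noteq> 0" unfolding u_def using eq0 ne by blast
    ultimately show "0 < u" "u < int p" by auto
  qed
  have hlin: "h (vadd p \<xi> (smul p c \<xi>0)) = (h \<xi> + int c * u) mod int p" for \<xi> c
    unfolding h_def u_def by (rule h_lin)
  obtain v where v: "[u * v = 1] (mod int p)" using cong_solve_coprime_int[OF coprime_small[OF pr u]] by blast
  have fib: "card {\<xi>\<in>P. h \<xi> = s} = card {\<xi>\<in>P. h \<xi> = 0}" if s: "s \<in> {0..<int p}" for s
  proof -
    define c where "c = nat ((v * s) mod int p)"
    have cp: "c < p" unfolding c_def using p by (simp add: nat_less_iff)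
    have cu: "(int c * u) mod int p = s"
    proof -
      have "int c = (v * s) mod int p" unfolding c_def using p by simp
      then have "(int c * u) mod int p = (v * s * u) mod int p" by (simp add: mod_mult_left_eq)
      also have "v * s * u = s * (u * v)" by (simp add: algebra_simps)
      also have "(s * (u * v)) mod int p = (s * 1) mod int p"
        using v unfolding cong_def by (metis mod_mult_right_eq)
      also have "\<dots> = s" using s by simp
      finally show ?thesis .
    qed
    define c' where "c' = (p - c) mod p"
    have c'p: "c' < p" unfolding c'_def using p by simp
    have dv: "p dvd (c + c')"
    proof (cases "c = 0")
      case True then show ?thesis unfolding c'_def by simp
    next
      case False then show ?thesis unfolding c'_def using cp by simp
    qed
    define f where "f \<xi> = vadd p \<xi> (smul p c \<xi>0)" for \<xi>
    define g where "g \<xi> = vadd p \<xi> (smul p c' \<xi>0)" for \<xi>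
    have gf: "g (f \<xi>) = \<xi>" if "\<xi> \<in> P" for \<xi>
    proof
      fix i
      have "\<xi> i < p" using Fvec_lt[OF _ p] PF that by auto
      then show "g (f \<xi>) i = \<xi> i" unfolding f_def g_def vadd_def smul_def
        using mod_cancel_aux[OF dv, of "\<xi> i" "\<xi>0 i"] by simp
    qed
    have fg: "f (g \<xi>) = \<xi>" if "\<xi> \<in> P" for \<xi>
    proof
      fix i
      have dv': "p dvd (c' + c)" using dv by (simp add: add.commute)
      have "\<xi> i < p" using Fvec_lt[OF _ p] PF that by auto
      then show "f (g \<xi>) i = \<xi> i" unfolding f_def g_def vadd_def smul_def
        using mod_cancel_aux[OF dv', of "\<xi> i" "\<xi>0 i"] by simp
    qed
    have "bij_betw f {\<xi>\<in>P. h \<xi> = 0} {\<xi>\<in>P. h \<xi> = s}"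
    proof (rule bij_betw_byWitness[where f'=g])
      show "\<forall>a\<in>{\<xi> \<in> P. h \<xi> = 0}. g (f a) = a" using gf by auto
      show "\<forall>a\<in>{\<xi> \<in> P. h \<xi> = s}. f (g a) = a" using fg by auto
      show "f ` {\<xi> \<in> P. h \<xi> = 0} \<subseteq> {\<xi> \<in> P. h \<xi> = s}"
      proof
        fix \<eta> assume "\<eta> \<in> f ` {\<xi> \<in> P. h \<xi> = 0}"
        then obtain \<xi> where "\<xi> \<in> P" "h \<xi> = 0" "\<eta> = f \<xi>" by auto
        then show "\<eta> \<in> {\<xi> \<in> P. h \<xi> = s}"
          using clo cp \<xi>0 hlin cu unfolding f_def by auto
      qed
      show "g ` {\<xi> \<in> P. h \<xi> = s} \<subseteq> {\<xi> \<in> P. h \<xi> = 0}"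
      proof
        fix \<eta> assume "\<eta> \<in> g ` {\<xi> \<in> P. h \<xi> = s}"
        then obtain \<xi> where xi: "\<xi> \<in> P" "h \<xi> = s" "\<eta> = g \<xi>" by auto
        have "h \<eta> = (s + int c' * u) mod int p" using xi hlin unfolding g_def by simp
        also have "\<dots> = ((int c * u) mod int p + int c' * u) mod int p" using cu by simp
        also have "\<dots> = (int (c + c') * u) mod int p" by (simp add: mod_simps algebra_simps)
        also have "\<dots> = 0"
        proof -
          obtain q where "c + c' = p * q" using dv by auto
          then show ?thesis by simp
        qed
        finally show "\<eta> \<in> {\<xi> \<in> P. h \<xi> = 0}" using xi clo c'p \<xi>0 unfolding g_def by auto
      qed
    qed
    then show ?thesis by (simp add: bij_betw_same_card)
  qed
  have "card P = (\<Sum>s\<in>{0..<int p}. card {\<xi>\<in>P. h \<xi> = s})"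
  proof -
    have "h ` P \<subseteq> {0..<int p}" unfolding h_def using p by auto
    then have "(\<Sum>s\<in>{0..<int p}. \<Sum>\<xi>\<in>{\<xi>\<in>P. h \<xi> = s}. (1::nat)) = (\<Sum>\<xi>\<in>P. 1)"
      using sum.group[OF fP, of "{0..<int p}" h "\<lambda>_. 1::nat"] by simp
    then show ?thesis by simp
  qed
  also have "\<dots> = (\<Sum>s\<in>{0..<int p}. card {\<xi>\<in>P. h \<xi> = 0})" using fib by (rule sum.cong[OF refl])
  also have "\<dots> = p * card {\<xi>\<in>P. h \<xi> = 0}" by simp
  also have "{\<xi>\<in>P. h \<xi> = 0} = {\<xi>\<in>P. dotp n p x \<xi> = dotp n p y \<xi>}" using eq0 by auto
  finally show ?thesis by simp
qed


definition Nf :: "nat \<Rightarrow> nat \<Rightarrow> (nat \<Rightarrow> nat) set \<Rightarrow> (nat \<Rightarrow> nat) \<Rightarrow> real" where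
  "Nf n p E \<xi> = (\<Sum>x\<in>E. \<Sum>y\<in>E. if dotp n p x \<xi> = dotp n p y \<xi> then 1 else 0)"

lemma sum_ind_card:
  assumes "finite A"
  shows "(\<Sum>x\<in>A. if P x then 1 else (0::real)) = real (card {x\<in>A. P x})"
proof -
  have "(\<Sum>x\<in>A. if P x then 1 else (0::real)) = (\<Sum>x\<in>{x\<in>A. P x}. 1)"
    using assms by (simp only: sum.inter_filter)
  then show ?thesis by simp
qed

lemma cs_sum:
  fixes a :: "nat \<Rightarrow> real"
  assumes p: "0 < p"
  shows "(\<Sum>t<p. a t) ^ 2 / p \<le> (\<Sum>t<p. a t ^ 2)"
proof -
  define S where "S = (\<Sum>t<p. a t)"
  define M where "M = S / p"
  have "0 \<le> (\<Sum>t<p. (a t - M) ^ 2)" by (simp add: sum_nonneg)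
  also have "\<dots> = (\<Sum>t<p. a t ^ 2) - 2 * M * S + p * M ^ 2"
    unfolding S_def by (simp add: power2_diff sum.distrib sum_subtractf sum_distrib_left algebra_simps)
  also have "\<dots> = (\<Sum>t<p. a t ^ 2) - S ^ 2 / p"
    unfolding M_def using p by (simp add: field_simps power2_eq_square)
  finally show ?thesis unfolding S_def by simp
qed

lemma Nf_ge:
  assumes p: "0 < p" and fE: "finite E"
  shows "real (card E) ^ 2 / p \<le> Nf n p E \<xi>"
proof -
  define d where "d x = dotp n p x \<xi>" for x
  define a where "a t = real (card {y\<in>E. d y = t})" for t
  have dT: "d ` E \<subseteq> {..<p}" unfolding d_def using dotp_lt[OF p] by auto
  have "Nf n p E \<xi> = (\<Sum>x\<in>E. a (d x))"
    unfolding Nf_def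
  proof (rule sum.cong[OF refl])
    fix x assume "x \<in> E"
    have "(\<Sum>y\<in>E. if d x = d y then 1 else (0::real)) = real (card {y\<in>E. d x = d y})"
      by (rule sum_ind_card[OF fE])
    also have "{y\<in>E. d x = d y} = {y\<in>E. d y = d x}" by auto
    finally show "(\<Sum>y\<in>E. if dotp n p x \<xi> = dotp n p y \<xi> then 1 else 0) = a (d x)"
      unfolding a_def d_def by simp
  qed
  also have "\<dots> = (\<Sum>t<p. \<Sum>x\<in>{x\<in>E. d x = t}. a (d x))"
    using sum.group[OF fE _ dT, of "\<lambda>x. a (d x)"] by simp
  also have "\<dots> = (\<Sum>t<p. a t ^ 2)"
  proof (rule sum.cong[OF refl])
    fix t
    have "(\<Sum>x\<in>{x\<in>E. d x = t}. a (d x)) = (\<Sum>x\<in>{x\<in>E. d x = t}. a t)" by simp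
    also have "\<dots> = a t ^ 2" unfolding a_def by (simp add: power2_eq_square)
    finally show "(\<Sum>x\<in>{x\<in>E. d x = t}. a (d x)) = a t ^ 2" .
  qed
  finally have N: "Nf n p E \<xi> = (\<Sum>t<p. a t ^ 2)" .
  have "(\<Sum>t<p. a t) = (\<Sum>t<p. \<Sum>x\<in>{x\<in>E. d x = t}. (1::real))" unfolding a_def by simp
  also have "\<dots> = (\<Sum>x\<in>E. 1)" using sum.group[OF fE _ dT, of "\<lambda>_. 1::real"] by simp
  finally have "(\<Sum>t<p. a t) = real (card E)" by simp
  then show ?thesis using N cs_sum[OF p, of a] by simp
qed


lemma T_bound:
  assumes pr: "prime p" and P: "is_subspace n p P" and E: "E \<subseteq> Fvec n p" and Q: "p ^ m \<le> card P"
  shows "(\<Sum>x\<in>E. \<Sum>y\<in>E. if (\<forall>\<xi>\<in>P. dotp n p x \<xi> = dotp n p y \<xi>) then 1 else (0::real))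
     \<le> real (card E) ^ 2 / real p ^ m + 2 / real p ^ m * (\<Sum>\<xi>\<in>P - {vzero}. Nf n p E \<xi> - real (card E) ^ 2 / p)"
proof -
  have p: "0 < p" and p2: "2 \<le> p" using pr prime_gt_0_nat prime_ge_2_nat by auto
  have PF: "P \<subseteq> Fvec n p" and z: "vzero \<in> P" using P unfolding is_subspace_def by auto
  have fP: "finite P" using PF Fvec_finite_card finite_subset by blast
  have fE: "finite E" using E Fvec_finite_card finite_subset by blast
  define q where "q = real (card P)"
  define e2 where "e2 = real (card E) ^ 2"
  define T where "T = (\<Sum>x\<in>E. \<Sum>y\<in>E. if (\<forall>\<xi>\<in>P. dotp n p x \<xi> = dotp n p y \<xi>) then 1 else (0::real))"
  define R where "R = (\<Sum>\<xi>\<in>P - {vzero}. Nf n p E \<xi> - real (card E) ^ 2 / p)"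
  have qpos: "real p ^ m \<le> q" using Q unfolding q_def by (metis of_nat_le_iff of_nat_power)
  have pm: "0 < real p ^ m" using p by simp
  have R0: "0 \<le> R" unfolding R_def using Nf_ge[OF p fE] by (simp add: sum_nonneg)
  have pt: "(if (\<forall>\<xi>\<in>P. dotp n p x \<xi> = dotp n p y \<xi>) then 1 else (0::real)) * (q * (real p - 1))
      = p * (\<Sum>\<xi>\<in>P. if dotp n p x \<xi> = dotp n p y \<xi> then 1 else (0::real)) - q" for x y
  proof (cases "\<forall>\<xi>\<in>P. dotp n p x \<xi> = dotp n p y \<xi>")
    case True
    then have "(\<Sum>\<xi>\<in>P. if dotp n p x \<xi> = dotp n p y \<xi> then 1 else (0::real)) = q"
      unfolding q_def by simp
    then show ?thesis using True by (simp add: algebra_simps)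
  next
    case False
    then obtain \<xi>0 where "\<xi>0 \<in> P" "dotp n p x \<xi>0 \<noteq> dotp n p y \<xi>0" by auto
    from fiber_count[OF pr P this] have a:
      "real p * real (card {\<xi>\<in>P. dotp n p x \<xi> = dotp n p y \<xi>}) = q"
      unfolding q_def by (metis of_nat_mult)
    have b: "(\<Sum>\<xi>\<in>P. if dotp n p x \<xi> = dotp n p y \<xi> then 1 else (0::real))
        = real (card {\<xi>\<in>P. dotp n p x \<xi> = dotp n p y \<xi>})" by (rule sum_ind_card[OF fP])
    have d: "(if (\<forall>\<xi>\<in>P. dotp n p x \<xi> = dotp n p y \<xi>) then 1 else (0::real)) = 0"
      using False by (simp only: if_not_P if_False)
    show ?thesis by (simp only: d b a mult_zero_left diff_self)
  qed
  define A where "A x y = (\<Sum>\<xi>\<in>P. if dotp n p x \<xi> = dotp n p y \<xi> then 1 else (0::real))" for x y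
  have S1: "T * (q * (real p - 1)) = (\<Sum>x\<in>E. \<Sum>y\<in>E. p * A x y - q)"
    unfolding T_def A_def sum_distrib_right using pt by simp
  have S2: "(\<Sum>x\<in>E. \<Sum>y\<in>E. p * A x y - q) = p * (\<Sum>x\<in>E. \<Sum>y\<in>E. A x y) - q * e2"
    unfolding e2_def by (simp add: sum_subtractf sum_distrib_left power2_eq_square)
  have "(\<Sum>x\<in>E. \<Sum>y\<in>E. A x y)
      = (\<Sum>x\<in>E. \<Sum>\<xi>\<in>P. \<Sum>y\<in>E. if dotp n p x \<xi> = dotp n p y \<xi> then 1 else (0::real))"
    unfolding A_def by (rule sum.cong[OF refl], rule sum.swap)
  also have "\<dots> = (\<Sum>\<xi>\<in>P. Nf n p E \<xi>)" unfolding Nf_def by (rule sum.swap)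
  finally have S3: "(\<Sum>x\<in>E. \<Sum>y\<in>E. A x y) = (\<Sum>\<xi>\<in>P. Nf n p E \<xi>)" .
  have S4: "(\<Sum>\<xi>\<in>P. Nf n p E \<xi>) = Nf n p E vzero + (\<Sum>\<xi>\<in>P - {vzero}. Nf n p E \<xi>)"
    using sum.remove[OF fP z] .
  have S4': "Nf n p E vzero = e2" unfolding Nf_def e2_def by (simp add: dotp_vzero_right power2_eq_square)
  have S5: "(\<Sum>\<xi>\<in>P - {vzero}. Nf n p E \<xi>) = R + (q - 1) * (e2 / p)"
  proof -
    have c1: "card P \<ge> 1" using z fP by (metis One_nat_def Suc_leI card_gt_0_iff empty_iff)
    have "card (P - {vzero}) = card P - 1" using z fP by simp
    then have "real (card (P - {vzero})) = q - 1" unfolding q_def using c1 by (simp add: of_nat_diff)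
    then show ?thesis unfolding R_def e2_def by (simp add: sum_subtractf)
  qed
  have Teq: "T * (q * (real p - 1)) = (real p - 1) * e2 + p * R"
  proof -
    have "T * (q * (real p - 1)) = p * (e2 + (R + (q - 1) * (e2 / p))) - q * e2"
      using S1 S2 S3 S4 S4' S5 by simp
    also have "\<dots> = (real p - 1) * e2 + p * R" using p by (simp add: field_simps)
    finally show ?thesis .
  qed
  have "T * (q * (real p - 1)) \<le> (e2 + 2 * R) * (real p - 1)"
  proof -
    have "p * R \<le> 2 * (real p - 1) * R" using R0 p2 by (intro mult_right_mono) auto
    then show ?thesis unfolding Teq by (simp add: algebra_simps)
  qed
  then have "T * q \<le> e2 + 2 * R" using p2 by (simp add: mult.assoc[symmetric])
  moreover have qp: "0 < q" using qpos pm by linarith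
  ultimately have "T \<le> (e2 + 2 * R) / q" by (simp add: pos_le_divide_eq)
  also have "\<dots> \<le> (e2 + 2 * R) / real p ^ m"
    using qpos pm R0 e2_def qp by (intro divide_left_mono) auto
  finally show ?thesis unfolding T_def R_def e2_def by (simp add: add_divide_distrib)
qed


lemma sep:
  assumes p2: "2 \<le> p" and x: "x \<in> Fvec n p" and y: "y \<in> Fvec n p" and ne: "x \<noteq> y"
  shows "\<exists>\<xi>\<in>Fvec n p. dotp n p x \<xi> \<noteq> dotp n p y \<xi>"
proof -
  have p: "0 < p" using p2 by simp
  obtain i where i: "x i \<noteq> y i" using ne by auto
  have "i < n"
  proof (rule ccontr)
    assume "\<not> i < n"
    then show False using i x y unfolding Fvec_def by auto
  qed
  define e where "e = (\<lambda>j. if j = i then 1 else (0::nat))"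
  have eF: "e \<in> Fvec n p" unfolding e_def Fvec_def using p2 \<open>i < n\<close> by auto
  have de: "dotp n p z e = z i" if "z \<in> Fvec n p" for z
  proof -
    have "(\<Sum>j<n. z j * e j) = z i" unfolding e_def using \<open>i < n\<close> by (simp add: if_distrib cong: if_cong)
    then show ?thesis unfolding dotp_def using Fvec_mod[OF that p] by simp
  qed
  show ?thesis using de[OF x] de[OF y] i eF by metis
qed

lemma sumF_bound:
  assumes pr: "prime p" and E: "E \<subseteq> Fvec n p"
  shows "(\<Sum>\<xi>\<in>Fvec n p. Nf n p E \<xi> - real (card E) ^ 2 / p) \<le> real (card E) * real p ^ n"
proof -
  have p: "0 < p" and p2: "2 \<le> p" using pr prime_gt_0_nat prime_ge_2_nat by auto
  have fF: "finite (Fvec n p)" and cF: "card (Fvec n p) = p ^ n" using Fvec_finite_card by auto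
  have fE: "finite E" using E fF finite_subset by blast
  have PF: "is_subspace n p (Fvec n p)" using Per_subspace[OF p, of n "{vzero}"] Per_vzero by simp
  define A where "A x y = (\<Sum>\<xi>\<in>Fvec n p. if dotp n p x \<xi> = dotp n p y \<xi> then 1 else (0::real))" for x y
  have Ab: "A x y \<le> (if x = y then real p ^ n else real p ^ n / p)" if x: "x \<in> E" and y: "y \<in> E" for x y
  proof (cases "x = y")
    case True
    have "A x y \<le> (\<Sum>\<xi>\<in>Fvec n p. 1)" unfolding A_def by (rule sum_mono) auto
    then show ?thesis using True cF by simp
  next
    case False
    obtain \<xi>0 where "\<xi>0 \<in> Fvec n p" "dotp n p x \<xi>0 \<noteq> dotp n p y \<xi>0"
      using sep[OF p2 _ _ False] x y E by blast
    from fiber_count[OF pr PF this] have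
      "real p * real (card {\<xi>\<in>Fvec n p. dotp n p x \<xi> = dotp n p y \<xi>}) = real p ^ n"
      using cF by (metis of_nat_mult of_nat_power)
    moreover have "A x y = real (card {\<xi>\<in>Fvec n p. dotp n p x \<xi> = dotp n p y \<xi>})"
      unfolding A_def by (rule sum_ind_card[OF fF])
    ultimately have "A x y = real p ^ n / p" using p by (simp add: field_simps)
    then show ?thesis using False by simp
  qed
  have "(\<Sum>\<xi>\<in>Fvec n p. Nf n p E \<xi>) = (\<Sum>x\<in>E. \<Sum>\<xi>\<in>Fvec n p. \<Sum>y\<in>E. if dotp n p x \<xi> = dotp n p y \<xi> then 1 else (0::real))"
    unfolding Nf_def by (rule sum.swap)
  also have "\<dots> = (\<Sum>x\<in>E. \<Sum>y\<in>E. A x y)"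
    unfolding A_def by (rule sum.cong[OF refl], rule sum.swap)
  also have "\<dots> \<le> (\<Sum>x\<in>E. \<Sum>y\<in>E. (if x = y then real p ^ n else 0) + real p ^ n / p)"
  proof (intro sum_mono)
    fix x y assume xy: "x \<in> E" "y \<in> E"
    have h0: "0 \<le> real p ^ n / p" by simp
    have h1: "A x y \<le> (if x = y then real p ^ n else real p ^ n / p)" using Ab[OF xy] .
    show "A x y \<le> (if x = y then real p ^ n else 0) + real p ^ n / p"
    proof (cases "x = y")
      case True
      then have a: "A x y \<le> real p ^ n" using h1 by simp
      have "A x y \<le> real p ^ n + real p ^ n / p" using a h0 by linarith
      then show ?thesis using True by simp
    next
      case False
      then show ?thesis using h1 by (simp only: if_False)
    qed
  qed
  also have "\<dots> = (\<Sum>x\<in>E. real p ^ n + real (card E) * (real p ^ n / p))"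
    by (rule sum.cong[OF refl]) (use fE in \<open>simp add: sum.distrib\<close>)
  also have "\<dots> = real (card E) * real p ^ n + real (card E) ^ 2 * (real p ^ n / p)"
    by (simp add: power2_eq_square algebra_simps)
  finally have N: "(\<Sum>\<xi>\<in>Fvec n p. Nf n p E \<xi>) \<le> real (card E) * real p ^ n + real (card E) ^ 2 * (real p ^ n / p)" .
  have "(\<Sum>\<xi>\<in>Fvec n p. Nf n p E \<xi> - real (card E) ^ 2 / p)
      = (\<Sum>\<xi>\<in>Fvec n p. Nf n p E \<xi>) - real p ^ n * (real (card E) ^ 2 / p)"
    using cF by (simp add: sum_subtractf)
  then show ?thesis using N by (simp add: field_simps)
qed


lemma part2:
  assumes pr: "prime p" and G: "G \<subseteq> Grass p n k" and kn: "k \<le> n" and E: "E \<subseteq> Fvec n p" and B0: "0 \<le> B"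
    and hyp: "\<forall>\<xi>\<in>Fvec n p - {vzero}. real (card {W\<in>G. \<xi> \<in> Per n p W}) \<le> B"
  shows "real (energy E (cosets_of n p G))
    \<le> real (card G) * real (card E) ^ 2 / real p ^ (n - k) + 2 * B * real (card E) * real p ^ n / real p ^ (n - k)"
proof -
  define m where "m = n - k"
  have p: "0 < p" and p2: "2 \<le> p" using pr prime_gt_0_nat prime_ge_2_nat by auto
  have fG: "finite G" using G Grass_finite finite_subset by blast
  have sG: "\<And>W. W \<in> G \<Longrightarrow> is_subspace n p W" using G Grass_sub by blast
  have fF: "finite (Fvec n p)" using Fvec_finite_card by blast
  have fE: "finite E" using E fF finite_subset by blast
  have pm: "0 < real p ^ m" using p by simp
  define e2 where "e2 = real (card E) ^ 2"
  define D where "D \<xi> = Nf n p E \<xi> - real (card E) ^ 2 / p" for \<xi>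
  have D0: "0 \<le> D \<xi>" for \<xi> unfolding D_def using Nf_ge[OF p fE] by simp
  define R where "R W = (\<Sum>\<xi>\<in>Per n p W - {vzero}. D \<xi>)" for W
  have SW: "(\<Sum>x\<in>E. real (card {y\<in>E. y \<in> coset p x W})) \<le> e2 / real p ^ m + 2 / real p ^ m * R W"
    if WG: "W \<in> G" for W
  proof -
    have "(\<Sum>x\<in>E. real (card {y\<in>E. y \<in> coset p x W}))
        \<le> (\<Sum>x\<in>E. \<Sum>y\<in>E. if (\<forall>\<xi>\<in>Per n p W. dotp n p x \<xi> = dotp n p y \<xi>) then 1 else (0::real))"
    proof (rule sum_mono)
      fix x assume xE: "x \<in> E"
      have "{y\<in>E. y \<in> coset p x W} \<subseteq> {y\<in>E. \<forall>\<xi>\<in>Per n p W. dotp n p x \<xi> = dotp n p y \<xi>}"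
      proof
        fix y assume "y \<in> {y\<in>E. y \<in> coset p x W}"
        then obtain w where y: "y \<in> E" "w \<in> W" "y = vadd p x w" unfolding coset_def by auto
        have "dotp n p x \<xi> = dotp n p y \<xi>" if xi: "\<xi> \<in> Per n p W" for \<xi>
        proof -
          have "dotp n p w \<xi> = 0" using xi y(2) unfolding Per_def by (auto simp: dotp_comm)
          then have "dotp n p y \<xi> = dotp n p x \<xi> mod p" using y(3) dotp_vadd_left by simp
          then show ?thesis using dotp_lt[OF p] by simp
        qed
        then show "y \<in> {y\<in>E. \<forall>\<xi>\<in>Per n p W. dotp n p x \<xi> = dotp n p y \<xi>}" using y by auto
      qed
      then have "card {y\<in>E. y \<in> coset p x W} \<le> card {y\<in>E. \<forall>\<xi>\<in>Per n p W. dotp n p x \<xi> = dotp n p y \<xi>}"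
        using fE by (intro card_mono) auto
      also have "real (card {y\<in>E. \<forall>\<xi>\<in>Per n p W. dotp n p x \<xi> = dotp n p y \<xi>})
          = (\<Sum>y\<in>E. if (\<forall>\<xi>\<in>Per n p W. dotp n p x \<xi> = dotp n p y \<xi>) then 1 else (0::real))"
        by (rule sum_ind_card[OF fE, symmetric])
      finally show "real (card {y\<in>E. y \<in> coset p x W})
          \<le> (\<Sum>y\<in>E. if (\<forall>\<xi>\<in>Per n p W. dotp n p x \<xi> = dotp n p y \<xi>) then 1 else (0::real))"
        by simp
    qed
    also have "\<dots> \<le> e2 / real p ^ m + 2 / real p ^ m * R W"
      unfolding e2_def R_def D_def m_def
      by (rule T_bound[OF pr Per_subspace[OF p] E Per_card_ge[OF p _ kn]]) (use G WG in auto)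
    finally show ?thesis .
  qed
  have "real (energy E (cosets_of n p G)) \<le> (\<Sum>W\<in>G. \<Sum>x\<in>E. real (card {y\<in>E. y \<in> coset p x W}))"
    by (rule energy_le[OF p fG sG E])
  also have "\<dots> \<le> (\<Sum>W\<in>G. e2 / real p ^ m + 2 / real p ^ m * R W)"
    by (rule sum_mono) (rule SW)
  also have "\<dots> = real (card G) * (e2 / real p ^ m) + 2 / real p ^ m * (\<Sum>W\<in>G. R W)"
    by (simp add: sum.distrib sum_distrib_left)
  also have "(\<Sum>W\<in>G. R W) \<le> B * (real (card E) * real p ^ n)"
  proof -
    have "(\<Sum>W\<in>G. R W) = (\<Sum>W\<in>G. \<Sum>\<xi>\<in>Fvec n p - {vzero}. if \<xi> \<in> Per n p W then D \<xi> else 0)"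
    proof (rule sum.cong[OF refl])
      fix W assume "W \<in> G"
      have "Per n p W - {vzero} = (Fvec n p - {vzero}) \<inter> Per n p W" unfolding Per_def by auto
      then show "R W = (\<Sum>\<xi>\<in>Fvec n p - {vzero}. if \<xi> \<in> Per n p W then D \<xi> else 0)"
        unfolding R_def using sum.inter_restrict[of "Fvec n p - {vzero}" D "Per n p W"] fF by simp
    qed
    also have "\<dots> = (\<Sum>\<xi>\<in>Fvec n p - {vzero}. \<Sum>W\<in>G. if \<xi> \<in> Per n p W then D \<xi> else 0)"
      by (rule sum.swap)
    also have "\<dots> \<le> (\<Sum>\<xi>\<in>Fvec n p - {vzero}. B * D \<xi>)"
    proof (rule sum_mono)
      fix \<xi> assume xi: "\<xi> \<in> Fvec n p - {vzero}"
      have "(\<Sum>W\<in>G. if \<xi> \<in> Per n p W then D \<xi> else 0) = (\<Sum>W\<in>G. if \<xi> \<in> Per n p W then 1 else (0::real)) * D \<xi>"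
        unfolding sum_distrib_right by (rule sum.cong[OF refl]) simp
      also have "\<dots> = real (card {W\<in>G. \<xi> \<in> Per n p W}) * D \<xi>" by (simp only: sum_ind_card[OF fG])
      also have "\<dots> \<le> B * D \<xi>" using hyp xi D0 by (intro mult_right_mono) auto
      finally show "(\<Sum>W\<in>G. if \<xi> \<in> Per n p W then D \<xi> else 0) \<le> B * D \<xi>" .
    qed
    also have "\<dots> = B * (\<Sum>\<xi>\<in>Fvec n p - {vzero}. D \<xi>)" by (simp add: sum_distrib_left)
    also have "\<dots> \<le> B * (\<Sum>\<xi>\<in>Fvec n p. D \<xi>)"
      using B0 D0 fF by (intro mult_left_mono sum_mono2) auto
    also have "\<dots> \<le> B * (real (card E) * real p ^ n)"
      using B0 sumF_bound[OF pr E] unfolding D_def by (intro mult_left_mono) auto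
    finally show ?thesis .
  qed
  then have "real (card G) * (e2 / real p ^ m) + 2 / real p ^ m * (\<Sum>W\<in>G. R W)
      \<le> real (card G) * (e2 / real p ^ m) + 2 / real p ^ m * (B * (real (card E) * real p ^ n))"
    using pm by (intro add_left_mono mult_left_mono) auto
  finally show ?thesis unfolding e2_def m_def by (simp add: field_simps)
qed

theorem lemma2p3:
  fixes n m :: nat and \<beta> :: real
  assumes "n \<ge> 2" and "1 \<le> m" and "m \<le> n - 1" and "\<beta> > 0"
  shows
   "(\<forall>C1>0. \<forall>C2>0. \<exists>C>0. \<forall>p G E.
       prime p \<longrightarrow> G \<subseteq> Grass p n (n - m) \<longrightarrow>
       real (card G) \<ge> C1 * real p powr \<beta> \<longrightarrow> E \<subseteq> Fvec n p \<longrightarrow>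
       (\<forall>\<xi>\<in>Fvec n p - {vzero}.
          real (card {W\<in>G. \<xi> \<in> W}) \<le> C2 * real (card G) * real p powr (-\<beta>)) \<longrightarrow>
       real (energy E (cosets_of n p G))
         \<le> C * (real (card E) * real (card G)
                + real (card E) ^ 2 * real (card G) * real p powr (-\<beta>)))
  \<and> (\<forall>C1>0. \<forall>C2>0. \<exists>C>0. \<forall>p G E.
       prime p \<longrightarrow> G \<subseteq> Grass p n (n - m) \<longrightarrow>
       real (card G) \<ge> C1 * real p powr \<beta> \<longrightarrow> E \<subseteq> Fvec n p \<longrightarrow>
       (\<forall>\<xi>\<in>Fvec n p - {vzero}.
          real (card {W\<in>G. \<xi> \<in> Per n p W}) \<le> C2 * real (card G) * real p powr (-\<beta>)) \<longrightarrow>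
       real (energy E (cosets_of n p G))
         \<le> C * (real p powr (- real m) * real (card G)
                * (real (card E) ^ 2 + real (card E) * real p powr (real n - \<beta>))))"
proof (intro conjI allI impI)
  fix C1 C2 :: real assume C1: "C1 > 0" and C2: "C2 > 0"
  show "\<exists>C>0. \<forall>p G E.
       prime p \<longrightarrow> G \<subseteq> Grass p n (n - m) \<longrightarrow>
       real (card G) \<ge> C1 * real p powr \<beta> \<longrightarrow> E \<subseteq> Fvec n p \<longrightarrow>
       (\<forall>\<xi>\<in>Fvec n p - {vzero}.
          real (card {W\<in>G. \<xi> \<in> W}) \<le> C2 * real (card G) * real p powr (-\<beta>)) \<longrightarrow>
       real (energy E (cosets_of n p G))
         \<le> C * (real (card E) * real (card G)
                + real (card E) ^ 2 * real (card G) * real p powr (-\<beta>))"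
  proof (rule exI[of _ "1 + C2"], intro conjI allI impI)
    show "0 < 1 + C2" using C2 by simp
    fix p G E
    assume pr: "prime p" and G: "G \<subseteq> Grass p n (n - m)" and E: "E \<subseteq> Fvec n p"
      and hyp: "\<forall>\<xi>\<in>Fvec n p - {vzero}. real (card {W\<in>G. \<xi> \<in> W}) \<le> C2 * real (card G) * real p powr (-\<beta>)"
    have p: "0 < p" using pr prime_gt_0_nat by blast
    define X where "X = real p powr (-\<beta>)"
    have X0: "0 \<le> X" unfolding X_def by simp
    have B0: "0 \<le> C2 * real (card G) * X" using C2 X0 by simp
    have "real (energy E (cosets_of n p G)) \<le> real (card E) * real (card G) + real (card E) ^ 2 * (C2 * real (card G) * X)"
      by (rule part1[OF p G E B0]) (use hyp in \<open>simp add: X_def\<close>)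
    also have "\<dots> \<le> (1 + C2) * (real (card E) * real (card G) + real (card E) ^ 2 * real (card G) * X)"
    proof -
      have a: "0 \<le> real (card E) * real (card G)" by simp
      have b: "0 \<le> real (card E) ^ 2 * real (card G) * X" using X0 by simp
      have "real (card E) * real (card G) \<le> (1 + C2) * (real (card E) * real (card G))"
        using a C2 by (simp add: algebra_simps)
      moreover have "real (card E) ^ 2 * (C2 * real (card G) * X) \<le> (1 + C2) * (real (card E) ^ 2 * real (card G) * X)"
        using b C2 by (simp add: algebra_simps)
      ultimately show ?thesis by (simp add: distrib_left)
    qed
    finally show "real (energy E (cosets_of n p G))
         \<le> (1 + C2) * (real (card E) * real (card G)
                + real (card E) ^ 2 * real (card G) * real p powr (-\<beta>))" unfolding X_def .
  qed
next
  fix C1 C2 :: real assume C1: "C1 > 0" and C2: "C2 > 0"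
  show "\<exists>C>0. \<forall>p G E.
       prime p \<longrightarrow> G \<subseteq> Grass p n (n - m) \<longrightarrow>
       real (card G) \<ge> C1 * real p powr \<beta> \<longrightarrow> E \<subseteq> Fvec n p \<longrightarrow>
       (\<forall>\<xi>\<in>Fvec n p - {vzero}.
          real (card {W\<in>G. \<xi> \<in> Per n p W}) \<le> C2 * real (card G) * real p powr (-\<beta>)) \<longrightarrow>
       real (energy E (cosets_of n p G))
         \<le> C * (real p powr (- real m) * real (card G)
                * (real (card E) ^ 2 + real (card E) * real p powr (real n - \<beta>)))"
  proof (rule exI[of _ "1 + 2 * C2"], intro conjI allI impI)
    show "0 < 1 + 2 * C2" using C2 by simp
    fix p G E
    assume pr: "prime p" and G: "G \<subseteq> Grass p n (n - m)" and E: "E \<subseteq> Fvec n p"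
      and hyp: "\<forall>\<xi>\<in>Fvec n p - {vzero}. real (card {W\<in>G. \<xi> \<in> Per n p W}) \<le> C2 * real (card G) * real p powr (-\<beta>)"
    have p: "0 < p" using pr prime_gt_0_nat by blast
    have mn: "n - (n - m) = m" using assms by simp
    define X where "X = real p powr (-\<beta>)"
    have X0: "0 \<le> X" unfolding X_def by simp
    have B0: "0 \<le> C2 * real (card G) * X" using C2 X0 by simp
    define g where "g = real (card G)"
    define e where "e = real (card E)"
    define P where "P = real p ^ m"
    define Q where "Q = real p ^ n"
    have g0: "0 \<le> g" and e0: "0 \<le> e" and P0: "0 < P" and Q0: "0 \<le> Q"
      unfolding g_def e_def P_def Q_def using p by auto
    have "real (energy E (cosets_of n p G)) \<le> g * e ^ 2 / P + 2 * (C2 * g * X) * e * Q / P"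
      using part2[OF pr G _ E B0] hyp mn unfolding g_def e_def P_def Q_def X_def by simp
    also have "\<dots> \<le> (1 + 2 * C2) * (1 / P * g * (e ^ 2 + e * (Q * X)))"
    proof -
      have a: "0 \<le> g * e ^ 2 / P" using g0 e0 P0 by simp
      have b: "0 \<le> g * e * Q * X / P" using g0 e0 P0 Q0 X0 by simp
      have "g * e ^ 2 / P + 2 * (C2 * g * X) * e * Q / P = g * e ^ 2 / P + 2 * C2 * (g * e * Q * X / P)"
        by (simp add: field_simps)
      also have "\<dots> \<le> (1 + 2 * C2) * (g * e ^ 2 / P) + (1 + 2 * C2) * (g * e * Q * X / P)"
      proof (rule add_mono)
        have "0 \<le> 2 * C2 * (g * e ^ 2 / P)" using a C2 by (intro mult_nonneg_nonneg) auto
        then show "g * e ^ 2 / P \<le> (1 + 2 * C2) * (g * e ^ 2 / P)" by (simp only: distrib_right mult_1)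
        show "2 * C2 * (g * e * Q * X / P) \<le> (1 + 2 * C2) * (g * e * Q * X / P)"
          using b by (simp only: distrib_right mult_1)
      qed
      also have "\<dots> = (1 + 2 * C2) * (1 / P * g * (e ^ 2 + e * (Q * X)))"
        using P0 by (simp add: field_simps)
      finally show ?thesis .
    qed
    also have "1 / P = real p powr (- real m)"
      unfolding P_def using p by (simp add: powr_minus powr_realpow divide_inverse)
    also have "Q * X = real p powr (real n - \<beta>)"
      unfolding Q_def X_def using p by (simp add: powr_diff powr_minus powr_realpow divide_inverse)
    finally show "real (energy E (cosets_of n p G))
         \<le> (1 + 2 * C2) * (real p powr (- real m) * real (card G)
                * (real (card E) ^ 2 + real (card E) * real p powr (real n - \<beta>)))"
      unfolding g_def e_def .
  qed
qed

end
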